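(* Let $k$ be a positive integer, $a\in\mathbb C\setminus\mathbb Z_0^-$, and let $s\in\mathbb C$ be arbitrary when $|z|<1$, or $\Re(s)>k$ when $|z|=1$. Then $$\Phi_k(z,s,a)=\frac1{a^s}+\sum_{r=0}^{k-1}\binom{k}{r} z^{k-r}\,\Phi_{k-r}\bigl(z,s,a+(k-r)\bigr).$$
   Context: $\mathbb Z_0^-=\{0,-1,-2,\ldots\}$. The multiple Hurwitz-Lerch zeta function of order $k$ is $\Phi_k(z,s,a)=\sum_{m_1,\ldots,m_k=0}^\infty\frac{z^{m_1+\dots+m_k}}{(m_1+\dots+m_k+a)^{s}}$ for $a\in\mathbb C\setminus\mathbb Z_0^-$, with $s\in\mathbb C$ when $|z|<1$ and $\Re(s)>k$ when $|z|=1$. *)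

theory Defs
  imports "HOL-Analysis.Analysis"
begin

definition Phi :: "nat \<Rightarrow> complex \<Rightarrow> complex \<Rightarrow> complex \<Rightarrow> complex" where
  "Phi k z s a = (\<Sum>\<^sub>\<infinity>m\<in>{m :: nat list. length m = k}.
      z ^ sum_list m / (of_nat (sum_list m) + a) powr s)"

end

theory Submission
  imports Defs "HOL-Real_Asymp.Real_Asymp"
begin


lemma lists_Suc_eq: "{b::'a list. length b = Suc k} = (\<lambda>(x,b). x#b) ` (UNIV \<times> {b. length b = k})"
  by (auto simp: length_Suc_conv image_iff)

lemma inj_Cons_pair: "inj_on (\<lambda>(x,b). x#b) A"
  by (auto simp: inj_on_def)

lemma binom_sum_lists:
  fixes F :: "nat \<Rightarrow> 'a::comm_ring_1"
  shows "(\<Sum>b\<in>{b::bool list. length b = k}. F (count_list b True)) = (\<Sum>j\<le>k. of_nat (k choose j) * F j)"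
proof (induction k arbitrary: F)
  case 0
  have "{b::bool list. length b = 0} = {[]}" by auto
  then show ?case by simp
next
  case (Suc k)
  have "(\<Sum>b\<in>{b::bool list. length b = Suc k}. F (count_list b True))
      = (\<Sum>p\<in>UNIV \<times> {b::bool list. length b = k}. F (count_list (fst p # snd p) True))"
    unfolding lists_Suc_eq by (subst sum.reindex[OF inj_Cons_pair]) (simp add: case_prod_beta o_def)
  also have "\<dots> = (\<Sum>x\<in>UNIV. \<Sum>b\<in>{b::bool list. length b = k}. F (count_list (x # b) True))"
    unfolding sum.cartesian_product by (simp add: case_prod_beta)
  also have "\<dots> = (\<Sum>b\<in>{b::bool list. length b = k}. F (count_list b True)) +
                  (\<Sum>b\<in>{b::bool list. length b = k}. F (Suc (count_list b True)))"
    by (simp add: UNIV_bool add.commute)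
  also have "\<dots> = (\<Sum>j\<le>k. of_nat (k choose j) * F j) + (\<Sum>j\<le>k. of_nat (k choose j) * F (Suc j))"
    using Suc.IH[of F] Suc.IH[of "\<lambda>j. F (Suc j)"] by simp
  also have "(\<Sum>j\<le>k. of_nat (k choose j) * F j) = (\<Sum>j\<le>Suc k. of_nat (k choose j) * F j)"
    by (simp add: binomial_eq_0)
  also have "\<dots> = F 0 + (\<Sum>j\<le>k. of_nat (k choose Suc j) * F (Suc j))"
    by (subst sum.atMost_Suc_shift) simp
  also have "(\<Sum>j\<le>Suc k. of_nat (Suc k choose j) * F j) = F 0 + (\<Sum>j\<le>k. of_nat (Suc k choose Suc j) * F (Suc j))"
    by (subst sum.atMost_Suc_shift) simp
  moreover have "(\<Sum>j\<le>k. of_nat (Suc k choose Suc j) * F (Suc j)) =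
      (\<Sum>j\<le>k. of_nat (k choose Suc j) * F (Suc j)) + (\<Sum>j\<le>k. of_nat (k choose j) * F (Suc j))"
    by (simp add: sum.distrib[symmetric] algebra_simps)
  ultimately show ?case by (simp add: algebra_simps)
qed

fun dec :: "bool list \<Rightarrow> nat list \<Rightarrow> nat list" where
  "dec [] m = []"
| "dec (False # b) m = 0 # dec b m"
| "dec (True # b) m = Suc (hd m) # dec b (tl m)"

lemma dec_length: "length (dec b m) = length b"
  by (induction b m rule: dec.induct) auto

lemma dec_sum: "length m = count_list b True \<Longrightarrow> sum_list (dec b m) = sum_list m + count_list b True"
  by (induction b m rule: dec.induct) (auto simp: length_Suc_conv)

lemma dec_inj: "length m = count_list b True \<Longrightarrow> length m' = count_list b' True \<Longrightarrow>
   length b = length b' \<Longrightarrow> dec b m = dec b' m' \<Longrightarrow> b = b' \<and> m = m'"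
proof (induction b m arbitrary: b' m' rule: dec.induct)
  case (1 m)
  then show ?case by auto
next
  case (2 b m)
  then obtain c b'' where "b' = c # b''" by (cases b') auto
  with 2 show ?case by (cases c) auto
next
  case (3 b m)
  then obtain c b'' where b': "b' = c # b''" by (cases b') auto
  from 3 obtain x ms where m: "m = x # ms" by (cases m) auto
  show ?case
  proof (cases c)
    case True
    with 3 b' obtain y ms' where m': "m' = y # ms'" by (cases m') auto
    with 3 b' m True show ?thesis by auto
  next
    case False with 3 b' show ?thesis by auto
  qed
qed

lemma dec_surj: "dec (map (\<lambda>x. x \<noteq> 0) l) (map (\<lambda>x. x - 1) (filter (\<lambda>x. x \<noteq> 0) l)) = l"
  by (induction l) auto

lemma dec_count: "length (map (\<lambda>x. x - 1) (filter (\<lambda>x. x \<noteq> (0::nat)) l)) = count_list (map (\<lambda>x. x \<noteq> 0) l) True"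
  by (induction l) auto



lemma prod_summable:
  fixes g :: "nat \<Rightarrow> real"
  assumes nn: "\<And>x. g x \<ge> 0" and sg: "g summable_on UNIV"
  shows "(\<lambda>m. prod_list (map g m)) summable_on {m. length m = k}"
proof (induction k)
  case 0
  have "{m::nat list. length m = 0} = {[]}" by auto
  then show ?case by simp
next
  case (Suc k)
  define S where "S = infsum (\<lambda>m. prod_list (map g m)) {m. length m = k}"
  have hs: "((\<lambda>m. prod_list (map g m)) has_sum S) {m. length m = k}"
    using Suc.IH S_def by (simp add: summable_iff_has_sum_infsum)
  have sum1: "(\<lambda>(x,m). g x * prod_list (map g m)) summable_on (UNIV \<times> {m. length m = k})"
  proof (rule summable_on_SigmaI[where g = "\<lambda>x. g x * S"])
    show "((\<lambda>y. case (x, y) of (x, m) \<Rightarrow> g x * prod_list (map g m)) has_sum g x * S) {m. length m = k}" for x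
      using has_sum_cmult_right[OF hs, of "g x"] by simp
    show "(\<lambda>x. g x * S) summable_on UNIV" using sg by (rule summable_on_cmult_left)
    show "0 \<le> (case (x, y) of (x, m) \<Rightarrow> g x * prod_list (map g m))" for x y
      using nn by (auto intro!: mult_nonneg_nonneg prod_list_nonneg)
  qed
  have eq: "{m::nat list. length m = Suc k} = (\<lambda>(x,m). x#m) ` (UNIV \<times> {m. length m = k})"
    by (auto simp: length_Suc_conv image_iff)
  have inj: "inj_on (\<lambda>(x,m::nat list). x#m) (UNIV \<times> {m. length m = k})"
    by (auto simp: inj_on_def)
  have "((\<lambda>m. prod_list (map g m)) \<circ> (\<lambda>(x,m). x#m)) summable_on (UNIV \<times> {m. length m = k})"
    using sum1 by (simp add: o_def case_prod_unfold)
  then have "(\<lambda>m. prod_list (map g m)) summable_on ((\<lambda>(x,m). x#m) ` (UNIV \<times> {m. length m = k}))"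
    using summable_on_reindex[OF inj] by blast
  then show ?case by (subst eq)
qed

lemma nonpos_bound:
  fixes a :: complex
  assumes "a \<notin> \<int>\<^sub>\<le>\<^sub>0"
  obtains c where "c > 0" "\<And>n. c * (real n + 1) \<le> norm (of_nat n + a)"
proof -
  have nz: "of_nat n + a \<noteq> 0" for n
    using assms plus_of_nat_eq_0_imp[of a n] by (auto simp: add.commute)
  define N where "N = nat \<lceil>2 * norm a\<rceil> + 1"
  define c0 where "c0 = Min ((\<lambda>n. norm (of_nat n + a) / (real n + 1)) ` {..<N})"
  have "c0 > 0" unfolding c0_def
    using nz by (subst Min_gr_iff) (auto simp: N_def)
  define c where "c = min (1/2) c0"
  have "c > 0" using \<open>c0 > 0\<close> by (simp add: c_def)
  moreover have "c * (real n + 1) \<le> norm (of_nat n + a)" for n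
  proof (cases "n < N")
    case True
    have "c \<le> norm (of_nat n + a) / (real n + 1)"
      unfolding c_def c0_def using True by (intro min.coboundedI2 Min_le) auto
    then show ?thesis by (simp add: field_simps)
  next
    case False
    then have "real n \<ge> 2 * norm a + 1" unfolding N_def by linarith
    moreover have "norm (of_nat n + a) \<ge> real n - norm a"
      using norm_diff_ineq[of "of_nat n :: complex" a] by simp
    moreover have "c \<le> 1/2" by (simp add: c_def)
    moreover have "c * (real n + 1) \<le> (1/2) * (real n + 1)"
      using \<open>c \<le> 1/2\<close> by (intro mult_right_mono) auto
    ultimately show ?thesis by argo
  qed
  ultimately show ?thesis using that by blast
qed

lemma norm_powr_lower:
  fixes w s :: complex
  assumes "w \<noteq> 0"
  shows "norm w powr Re s / exp (\<bar>Im s\<bar> * pi) \<le> norm (w powr s)"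
proof -
  have "\<bar>Arg w\<bar> \<le> pi" using Arg_bounded[of w] by auto
  then have "\<bar>Im s * Arg w\<bar> \<le> \<bar>Im s\<bar> * pi"
    by (simp add: abs_mult mult_left_mono)
  then have "Im s * Arg w \<le> \<bar>Im s\<bar> * pi" by (rule abs_le_D1)
  then have "- Im s * Arg w \<ge> - (\<bar>Im s\<bar> * pi)" by simp
  then have "exp (- (\<bar>Im s\<bar> * pi)) \<le> exp (- Im s * Arg w)" by simp
  then have "norm w powr Re s * exp (- (\<bar>Im s\<bar> * pi)) \<le> norm w powr Re s * exp (- Im s * Arg w)"
    by (intro mult_left_mono) auto
  then show ?thesis by (simp add: norm_powr_complex exp_minus field_simps)
qed



lemma prod_power_list: "prod_list (map (\<lambda>x. (r::real) ^ x) m) = r ^ sum_list m"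
  by (induction m) (auto simp: power_add)

lemma prod_powr_list:
  "prod_list (map (\<lambda>x. (real x + 1) powr t) m) = prod_list (map (\<lambda>x. real x + 1) m) powr t"
  by (induction m) (auto simp: powr_mult prod_list_nonneg)

lemma prod_le_list: "prod_list (map (\<lambda>x. real x + 1) m) \<le> (real (sum_list m) + 1) ^ length m"
proof (induction m)
  case Nil then show ?case by simp
next
  case (Cons x m)
  have "(real x + 1) * prod_list (map (\<lambda>x. real x + 1) m) \<le> (real x + 1) * (real (sum_list m) + 1) ^ length m"
    using Cons by (intro mult_left_mono) auto
  also have "\<dots> \<le> (real (sum_list (x#m)) + 1) * (real (sum_list (x#m)) + 1) ^ length m"
    by (intro mult_mono power_mono) auto
  finally show ?case by simp
qed

lemma prod_ge1_list: "prod_list (map (\<lambda>x. real x + 1) m) \<ge> 1"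
  by (induction m) (auto intro: order_trans[OF _ mult_right_mono[of 1]] simp: )

lemma T_summable:
  fixes z s a :: complex and k :: nat
  assumes k: "k \<ge> 1" and a: "a \<notin> \<int>\<^sub>\<le>\<^sub>0"
    and cond: "norm z < 1 \<or> (norm z = 1 \<and> Re s > real k)"
  shows "(\<lambda>m. z ^ sum_list m / (of_nat (sum_list m) + a) powr s) summable_on {m::nat list. length m = k}"
proof -
  obtain c where c: "c > 0" "\<And>n. c * (real n + 1) \<le> norm (of_nat n + a)"
    using nonpos_bound[OF a] by blast
  define \<sigma> where "\<sigma> = Re s"
  define E where "E = exp (\<bar>Im s\<bar> * pi)"
  define D where "D = max (c powr (-\<sigma>)) ((1 + norm a) powr (-\<sigma>))"
  have E: "E > 0" by (simp add: E_def)
  have key: "norm (z^n / (of_nat n + a) powr s) \<le> E * D * (norm z ^ n * (real n + 1) powr (-\<sigma>))" for n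
  proof -
    define w where "w = of_nat n + (a::complex)"
    have "c * (real n + 1) > 0" using c(1) by simp
    then have wpos: "norm w > 0" using c(2)[of n] unfolding w_def by linarith
    then have wnz: "w \<noteq> 0" by auto
    have low: "norm w powr \<sigma> / E \<le> norm (w powr s)"
      using norm_powr_lower[OF wnz, of s] by (simp add: \<sigma>_def E_def)
    have "norm (z^n / w powr s) = norm z ^ n / norm (w powr s)" by (simp add: norm_divide norm_power)
    also have "\<dots> \<le> norm z ^ n / (norm w powr \<sigma> / E)"
      by (rule divide_left_mono) (use low wpos E in auto)
    also have "\<dots> = E * (norm z ^ n * norm w powr (-\<sigma>))" by (simp add: powr_minus field_simps)
    also have "norm w powr (-\<sigma>) \<le> D * (real n + 1) powr (-\<sigma>)"
    proof (cases "\<sigma> \<ge> 0")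
      case True
      have "norm w powr (-\<sigma>) \<le> (c * (real n + 1)) powr (-\<sigma>)"
        by (rule powr_mono2') (use True c in \<open>auto simp: w_def\<close>)
      also have "\<dots> = c powr (-\<sigma>) * (real n + 1) powr (-\<sigma>)"
        using c(1) by (simp add: powr_mult)
      also have "\<dots> \<le> D * (real n + 1) powr (-\<sigma>)"
        by (intro mult_right_mono) (auto simp: D_def)
      finally show ?thesis .
    next
      case False
      have "norm w \<le> real n + norm a" unfolding w_def
        using norm_triangle_ineq[of "of_nat n :: complex" a] by simp
      also have "\<dots> \<le> (1 + norm a) * (real n + 1)" by (simp add: algebra_simps)
      finally have wle: "norm w \<le> (1 + norm a) * (real n + 1)" .
      have "norm w powr (-\<sigma>) \<le> ((1 + norm a) * (real n + 1)) powr (-\<sigma>)"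
        by (rule powr_mono2) (use False wle in auto)
      also have "\<dots> = (1 + norm a) powr (-\<sigma>) * (real n + 1) powr (-\<sigma>)"
        by (simp add: powr_mult)
      also have "\<dots> \<le> D * (real n + 1) powr (-\<sigma>)"
        by (intro mult_right_mono) (auto simp: D_def)
      finally show ?thesis .
    qed
    then have "E * (norm z ^ n * norm w powr (-\<sigma>)) \<le> E * (norm z ^ n * (D * (real n + 1) powr (-\<sigma>)))"
      by (intro mult_left_mono) (use E in auto)
    finally show ?thesis by (simp add: w_def mult_ac)
  qed
  have "\<exists>g B. (\<forall>x. g x \<ge> 0) \<and> g summable_on UNIV \<and>
     (\<forall>m. length m = k \<longrightarrow> norm z ^ sum_list m * (real (sum_list m) + 1) powr (-\<sigma>) \<le> B * prod_list (map g m))"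
  proof (cases "norm z < 1")
    case True
    define \<rho>0 where "\<rho>0 = (1 + norm z) / 2"
    define \<rho> where "\<rho> = (1 + \<rho>0) / 2"
    define q where "q = \<rho>0 / \<rho>"
    have nz: "norm z \<ge> 0" by simp
    have h1: "0 < 1 + norm z" using nz by linarith
    have r01: "0 < \<rho>0" using h1 unfolding \<rho>0_def by simp
    have r02: "\<rho>0 < 1" using True nz unfolding \<rho>0_def by (simp add: field_simps)
    have r03: "norm z \<le> \<rho>0" using True nz unfolding \<rho>0_def by (simp add: field_simps)
    note r0 = r01 r02 r03
    have r: "0 < \<rho>" "\<rho> < 1" using r0 by (simp_all add: \<rho>_def field_simps)
    have q: "0 < q" "q < 1" using r0 r by (simp_all add: q_def \<rho>_def field_simps)
    have "(\<lambda>n. (real n + 1) powr (-\<sigma>) * q ^ n) \<longlonglongrightarrow> 0"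
      using q by real_asymp
    then have "Bseq (\<lambda>n. (real n + 1) powr (-\<sigma>) * q ^ n)" by (intro convergent_imp_Bseq convergentI)
    then obtain B where B: "\<And>n. norm ((real n + 1) powr (-\<sigma>) * q ^ n) \<le> B"
      by (auto simp: Bseq_def)
    have bound: "norm z ^ n * (real n + 1) powr (-\<sigma>) \<le> B * \<rho> ^ n" for n
    proof -
      have "norm z ^ n * (real n + 1) powr (-\<sigma>) \<le> \<rho>0 ^ n * (real n + 1) powr (-\<sigma>)"
        by (intro mult_right_mono power_mono) (use r0 in auto)
      also have "\<rho>0 ^ n = q ^ n * \<rho> ^ n" using r by (simp add: q_def power_divide)
      also have "q ^ n * \<rho> ^ n * (real n + 1) powr (-\<sigma>) = ((real n + 1) powr (-\<sigma>) * q ^ n) * \<rho> ^ n"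
        by simp
      also have "\<dots> \<le> B * \<rho> ^ n"
        using B[of n] q r by (intro mult_right_mono) auto
      finally show ?thesis .
    qed
    have "(\<lambda>x. \<rho> ^ x) summable_on UNIV"
      using r by (subst summable_on_UNIV_nonneg_real_iff) (auto intro: summable_geometric)
    then show ?thesis using r bound
      by (intro exI[of _ "\<lambda>x. \<rho> ^ x"] exI[of _ B]) (auto simp: prod_power_list)
  next
    case False
    with cond have z1: "norm z = 1" and sk: "\<sigma> > real k" by (auto simp: \<sigma>_def)
    define t where "t = \<sigma> / real k"
    have t: "t > 1" using sk k by (simp add: t_def field_simps)
    have "summable (\<lambda>n. real n powr (-t))" using t by (subst summable_real_powr_iff) auto
    then have "summable (\<lambda>n. real (Suc n) powr (-t))" by (subst summable_Suc_iff)
    then have "summable (\<lambda>n. (real n + 1) powr (-t))" by (simp add: add.commute)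
    then have gs: "(\<lambda>n. (real n + 1) powr (-t)) summable_on UNIV"
      by (subst summable_on_UNIV_nonneg_real_iff) auto
    have bound: "norm z ^ sum_list m * (real (sum_list m) + 1) powr (-\<sigma>) \<le> 1 * prod_list (map (\<lambda>n. (real n + 1) powr (-t)) m)"
      if "length m = k" for m
    proof -
      define P where "P = prod_list (map (\<lambda>x. real x + 1) m)"
      have P1: "P \<ge> 1" unfolding P_def by (rule prod_ge1_list)
      have Ple: "P \<le> (real (sum_list m) + 1) ^ k" unfolding P_def using prod_le_list[of m] that by simp
      have "(real (sum_list m) + 1) powr (-\<sigma>) = ((real (sum_list m) + 1) ^ k) powr (-t)"
        using k by (simp add: powr_realpow[symmetric] powr_powr t_def)
      also have "\<dots> \<le> P powr (-t)"
        by (rule powr_mono2') (use t P1 Ple in auto)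
      finally show ?thesis using z1 by (simp add: prod_powr_list P_def)
    qed
    show ?thesis
      by (intro exI[of _ "\<lambda>n. (real n + 1) powr (-t)"] exI[of _ 1]) (use gs bound in auto)
  qed
  then obtain g B where g: "\<And>x. g x \<ge> 0" "g summable_on UNIV"
    and gB: "\<And>m. length m = k \<Longrightarrow> norm z ^ sum_list m * (real (sum_list m) + 1) powr (-\<sigma>) \<le> B * prod_list (map g m)"
    by blast
  have ps: "(\<lambda>m. E * D * (B * prod_list (map g m))) summable_on {m::nat list. length m = k}"
    by (intro summable_on_cmult_right prod_summable g)
  have ps': "(\<lambda>m. norm (E * D * (B * prod_list (map g m)))) summable_on {m::nat list. length m = k}"
    by (rule summable_on_iff_abs_summable_on_real[THEN iffD1, OF ps])
  have "(\<lambda>m. norm (z ^ sum_list m / (of_nat (sum_list m) + a) powr s)) summable_on {m::nat list. length m = k}"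
  proof (rule Infinite_Sum.abs_summable_on_comparison_test'[OF ps])
    fix m :: "nat list" assume "m \<in> {m. length m = k}"
    then have "length m = k" by simp
    have "0 \<le> E * D"
      using E by (intro mult_nonneg_nonneg) (auto simp: D_def intro: max.coboundedI1)
    show "norm (z ^ sum_list m / (of_nat (sum_list m) + a) powr s) \<le> E * D * (B * prod_list (map g m))"
      using key[of "sum_list m"] mult_left_mono[OF gB[OF \<open>length m = k\<close>] \<open>0 \<le> E * D\<close>]
      by (rule order_trans)
  qed
  then show ?thesis by (rule summable_on_iff_abs_summable_on_complex[THEN iffD2])
qed



lemma Phi_0: "Phi 0 z s a = 1 / a powr s"
proof -
  have "{m::nat list. length m = 0} = {[]}" by auto
  then show ?thesis by (simp add: Phi_def)
qed

theorem theorem1p3: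
  fixes k :: nat and z s a :: complex
  assumes "k \<ge> 1"
    and "a \<notin> \<int>\<^sub>\<le>\<^sub>0"
    and "norm z < 1 \<or> (norm z = 1 \<and> Re s > real k)"
  shows "Phi k z s a = 1 / a powr s +
    (\<Sum>r<k. of_nat (k choose r) * z ^ (k - r) * Phi (k - r) z s (a + of_nat (k - r)))"
proof -
  define T where "T m = z ^ sum_list m / (of_nat (sum_list m) + a) powr s" for m :: "nat list"
  define Bk where "Bk = {b::bool list. length b = k}"
  define SS where "SS = Sigma Bk (\<lambda>b. {m::nat list. length m = count_list b True})"
  define h where "h = (\<lambda>(b, m). dec b m)"
  define G where "G j = z ^ j * Phi j z s (a + of_nat j)" for j
  have inj: "inj_on h SS"
    unfolding inj_on_def h_def SS_def Bk_def using dec_inj by auto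
  have img: "h ` SS = {m. length m = k}"
  proof
    show "h ` SS \<subseteq> {m. length m = k}" by (auto simp: h_def SS_def Bk_def dec_length)
    show "{m. length m = k} \<subseteq> h ` SS"
    proof
      fix l :: "nat list" assume "l \<in> {m. length m = k}"
      then show "l \<in> h ` SS" unfolding h_def SS_def Bk_def
        by (intro image_eqI[of _ _ "(map (\<lambda>x. x \<noteq> 0) l, map (\<lambda>x. x - 1) (filter (\<lambda>x. x \<noteq> 0) l))"])
           (use dec_surj[of l] dec_count[of l] in auto)
    qed
  qed
  have summ: "T summable_on {m. length m = k}"
    unfolding T_def using T_summable[OF assms] .
  then have summ': "(T \<circ> h) summable_on SS"
    using summ by (subst summable_on_reindex[OF inj, symmetric]) (simp add: img)
  have "Phi k z s a = infsum T {m. length m = k}" by (simp add: Phi_def T_def[abs_def])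
  also have "\<dots> = infsum (T \<circ> h) SS"
    by (subst infsum_reindex[OF inj, symmetric]) (simp add: img)
  also have "\<dots> = infsum (\<lambda>b. infsum (\<lambda>m. (T \<circ> h) (b, m)) {m::nat list. length m = count_list b True}) Bk"
    unfolding SS_def by (rule infsum_Sigma_banach[symmetric]) (use summ' SS_def in simp)
  also have "\<dots> = (\<Sum>b\<in>Bk. G (count_list b True))"
  proof -
    have fin: "finite Bk" unfolding Bk_def using finite_lists_length_eq[of "UNIV::bool set" k] by simp
    have "infsum (\<lambda>m. (T \<circ> h) (b, m)) {m::nat list. length m = count_list b True} = G (count_list b True)" for b
    proof -
      define j where "j = count_list b True"
      have "infsum (\<lambda>m. (T \<circ> h) (b, m)) {m::nat list. length m = j}
          = infsum (\<lambda>m. z ^ j * (z ^ sum_list m / (of_nat (sum_list m) + (a + of_nat j)) powr s)) {m::nat list. length m = j}"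
      proof (rule infsum_cong)
        fix m :: "nat list" assume "m \<in> {m. length m = j}"
        then have sd: "sum_list (dec b m) = sum_list m + j" by (simp add: dec_sum j_def)
        have e2: "of_nat (sum_list m + j) + a = of_nat (sum_list m) + (a + (of_nat j :: complex))"
          unfolding of_nat_add
          by (rule add.assoc[THEN trans], rule arg_cong[where f="\<lambda>x. of_nat (sum_list m) + x"], rule add.commute)
        have "(T \<circ> h) (b, m) = T (dec b m)" unfolding h_def comp_def prod.case ..
        also have "\<dots> = z ^ (sum_list m + j) / (of_nat (sum_list m + j) + a) powr s"
          unfolding T_def sd ..
        also have "\<dots> = z ^ (sum_list m + j) / (of_nat (sum_list m) + (a + of_nat j)) powr s"
          unfolding e2 ..
        also have "\<dots> = z ^ j * (z ^ sum_list m / (of_nat (sum_list m) + (a + of_nat j)) powr s)"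
          unfolding power_add by (simp only: times_divide_eq_right mult.commute)
        finally show "(T \<circ> h) (b, m) = z ^ j * (z ^ sum_list m / (of_nat (sum_list m) + (a + of_nat j)) powr s)" .
      qed
      also have "\<dots> = G j" unfolding G_def Phi_def by (rule infsum_cmult_right')
      finally show ?thesis by (simp add: j_def)
    qed
    then show ?thesis using fin by simp
  qed
  also have "\<dots> = (\<Sum>j\<le>k. of_nat (k choose j) * G j)"
    unfolding Bk_def by (rule binom_sum_lists)
  finally have main: "Phi k z s a = (\<Sum>j\<le>k. of_nat (k choose j) * G j)" .
  obtain k' where k': "k = Suc k'" using assms(1) by (cases k) auto
  have "(\<Sum>j\<le>k. of_nat (k choose j) * G j) = G 0 + (\<Sum>j<k. of_nat (k choose Suc j) * G (Suc j))"
    unfolding k' by (subst sum.atMost_Suc_shift) (simp add: lessThan_Suc_atMost)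
  also have "(\<Sum>j<k. of_nat (k choose Suc j) * G (Suc j)) = (\<Sum>r<k. of_nat (k choose Suc (k - Suc r)) * G (Suc (k - Suc r)))"
    by (rule sum.nat_diff_reindex[symmetric])
  also have "\<dots> = (\<Sum>r<k. of_nat (k choose r) * z ^ (k - r) * Phi (k - r) z s (a + of_nat (k - r)))"
  proof (rule sum.cong)
    fix r assume "r \<in> {..<k}"
    then have "Suc (k - Suc r) = k - r" by auto
    moreover have "k choose (k - r) = k choose r" using \<open>r \<in> {..<k}\<close> binomial_symmetric[of r k] by simp
    ultimately show "of_nat (k choose Suc (k - Suc r)) * G (Suc (k - Suc r)) = of_nat (k choose r) * z ^ (k - r) * Phi (k - r) z s (a + of_nat (k - r))"
      by (simp add: G_def mult.assoc)
  qed simp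
  finally have calc: "(\<Sum>j\<le>k. of_nat (k choose j) * G j) = G 0 + (\<Sum>r<k. of_nat (k choose r) * z ^ (k - r) * Phi (k - r) z s (a + of_nat (k - r)))" .
  have G0: "G 0 = 1 / a powr s" by (simp add: G_def Phi_0)
  have "Phi k z s a = G 0 + (\<Sum>r<k. of_nat (k choose r) * z ^ (k - r) * Phi (k - r) z s (a + of_nat (k - r)))"
    using main calc by (rule trans)
  then show ?thesis unfolding G0 .
qed

end
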